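(* Let $\mathcal{U}\subset\mathbb{R}^m$ be a nonempty closed convex set, let $\xi_1:\mathbb{R}^m\to\mathbb{R}$ be convex and differentiable with $\nabla\xi_1$ Lipschitz continuous with constant $L>0$, and let $\xi_2$ be a proper closed convex function that is strongly convex with constant $\mu>0$. Let $\xi=\xi_1+\xi_2$ and consider $\min_{{\bf u}\in\mathcal{U}}\xi({\bf u})$. Let ${\bf u}^0\in\mathcal{U}\cap\mathrm{dom}(\xi_2)$, ${\bf u}^{-1}={\bf u}^0$, $L_0\in(0,L]$, and for $k\ge1$ generate ${\bf u}^k$ as follows: choose $L_k\in(0,L]$ and $\omega_{k-1}$ with $0\le\omega_{k-1}\le\sqrt{L_{k-1}/L_k}$, set $\hat{\bf u}^{k-1}={\bf u}^{k-1}+\omega_{k-1}({\bf u}^{k-1}-{\bf u}^{k-2})$, and $${\bf u}^k=\arg\min_{{\bf u}\in\mathcal{U}}\ \xi_1(\hat{\bf u}^{k-1})+\langle\nabla\xi_1(\hat{\bf u}^{k-1}),{\bf u}-\hat{\bf u}^{k-1}\rangle+\tfrac{L_k}{2}\|{\bf u}-\hat{\bf u}^{k-1}\|^2+\xi_2({\bf u});$$ if $\xi({\bf u}^k)>\xi({\bf u}^{k-1})$, recompute ${\bf u}^k$ by the same formula with $\hat{\bf u}^{k-1}$ replaced by ${\bf u}^{k-1}$ (i.e. $\omega_{k-1}=0$). Assume that for every $k\ge1$ the final ${\bf u}^k$ and the extrapolated point $\hat{\bf u}^{k-1}$ actually used satisfy $$\xi_1({\bf u}^k)\le\xi_1(\hat{\bf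 u}^{k-1})+\langle\nabla\xi_1(\hat{\bf u}^{k-1}),{\bf u}^k-\hat{\bf u}^{k-1}\rangle+\tfrac{L_k}{2}\|{\bf u}^k-\hat{\bf u}^{k-1}\|^2 .$$ Then $\{{\bf u}^k\}$ converges R-linearly to the unique minimizer ${\bf u}^*$ of $\xi$ over $\mathcal{U}$: there exist constants $C>0$ and $0<\tau<1$ such that $\|{\bf u}^k-{\bf u}^*\|\le C\tau^k$ for all $k\ge0$.
   Context: Strong convexity of $\xi_2$ with constant $\mu>0$ means $\xi_2({\bf u})-\xi_2({\bf v})\ge\langle{\bf g}_{\bf v},{\bf u}-{\bf v}\rangle+\frac{\mu}{2}\|{\bf u}-{\bf v}\|^2$ for all ${\bf g}_{\bf v}\in\partial\xi_2({\bf v})$ and ${\bf u},{\bf v}\in\mathrm{dom}(\xi_2)$. *)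

theory Defs
  imports "HOL-Analysis.Analysis"
begin

definition edom :: "('a \<Rightarrow> ereal) \<Rightarrow> 'a set" where
  "edom f = {x. f x < \<infinity>}"

definition epigraph :: "('a \<Rightarrow> ereal) \<Rightarrow> ('a \<times> real) set" where
  "epigraph f = {(x, t). f x \<le> ereal t}"

definition proper_fun :: "('a \<Rightarrow> ereal) \<Rightarrow> bool" where
  "proper_fun f \<longleftrightarrow> (\<forall>x. f x \<noteq> -\<infinity>) \<and> edom f \<noteq> {}"

definition closed_fun :: "('a::topological_space \<Rightarrow> ereal) \<Rightarrow> bool" where
  "closed_fun f \<longleftrightarrow> closed (epigraph f)"

definition convex_fun :: "('a::real_vector \<Rightarrow> ereal) \<Rightarrow> bool" where
  "convex_fun f \<longleftrightarrow> convex (epigraph f)"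

definition subdiff :: "('a::real_inner \<Rightarrow> ereal) \<Rightarrow> 'a \<Rightarrow> 'a set" where
  "subdiff f v = {g. \<forall>u. f v + ereal (g \<bullet> (u - v)) \<le> f u}"

definition strongly_convex_sg :: "('a::real_inner \<Rightarrow> ereal) \<Rightarrow> real \<Rightarrow> bool" where
  "strongly_convex_sg f \<mu> \<longleftrightarrow>
     (\<forall>u\<in>edom f. \<forall>v\<in>edom f. \<forall>g\<in>subdiff f v.
        real_of_ereal (f u) - real_of_ereal (f v) \<ge> g \<bullet> (u - v) + \<mu> / 2 * (norm (u - v))\<^sup>2)"

definition prox_model ::
  "('a::real_inner \<Rightarrow> real) \<Rightarrow> ('a \<Rightarrow> 'a) \<Rightarrow> ('a \<Rightarrow> ereal) \<Rightarrow> real \<Rightarrow> 'a \<Rightarrow> 'a \<Rightarrow> ereal" where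
  "prox_model f1 G f2 Lk y x =
     ereal (f1 y + G y \<bullet> (x - y) + Lk / 2 * (norm (x - y))\<^sup>2) + f2 x"

definition is_argmin_on :: "'a set \<Rightarrow> ('a \<Rightarrow> ereal) \<Rightarrow> 'a \<Rightarrow> bool" where
  "is_argmin_on U F x \<longleftrightarrow> x \<in> U \<and> (\<forall>z\<in>U. F x \<le> F z)"

end

theory Submission
  imports Defs
begin

lemma norm_comb_sq:
  fixes a b :: "'a::real_inner"
  shows "(norm (t *\<^sub>R a + (1-t) *\<^sub>R b))\<^sup>2 = t*(norm a)\<^sup>2 + (1-t)*(norm b)\<^sup>2 - t*(1-t)*(norm (a-b))\<^sup>2"
  by (simp add: power2_norm_eq_inner inner_simps inner_commute algebra_simps)

lemma lim_arg:
  fixes a b :: real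
  assumes "\<And>s. 0 < s \<Longrightarrow> s \<le> 1 \<Longrightarrow> b*(1-s) \<le> a"
  shows "b \<le> a"
proof (rule ccontr)
  assume "\<not> b \<le> a"
  have a0: "0 \<le> a" using assms[of 1] by simp
  define s where "s = (b-a)/(2*b)"
  have bp: "b > 0" using a0 \<open>\<not> b \<le> a\<close> by linarith
  have "0 < s" "s \<le> 1" using bp a0 \<open>\<not> b \<le> a\<close> by (auto simp: s_def field_simps)
  hence "b*(1-s) \<le> a" by (rule assms)
  moreover have "b*(1-s) = (a+b)/2" using bp by (simp add: s_def field_simps)
  ultimately have "(a+b)/2 \<le> a" by simp
  thus False using \<open>\<not> b \<le> a\<close> by (simp add: field_simps)
qed

lemma sc_min:
  fixes \<phi> :: "'a::real_inner \<Rightarrow> real"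
  assumes sc: "\<And>x y t. x \<in> S \<Longrightarrow> y \<in> S \<Longrightarrow> 0 \<le> t \<Longrightarrow> t \<le> 1 \<Longrightarrow>
      t *\<^sub>R x + (1-t) *\<^sub>R y \<in> S \<and>
      \<phi> (t *\<^sub>R x + (1-t) *\<^sub>R y) \<le> t * \<phi> x + (1-t) * \<phi> y - \<kappa>/2 * t * (1-t) * (norm (x-y))\<^sup>2"
    and z: "z \<in> S" and zmin: "\<And>x. x \<in> S \<Longrightarrow> \<phi> z \<le> \<phi> x" and x: "x \<in> S"
  shows "\<kappa>/2*(norm (x-z))\<^sup>2 \<le> \<phi> x - \<phi> z"
proof (rule lim_arg)
  fix s :: real assume s: "0 < s" "s \<le> 1"
  from sc[OF x z, of s] s have "\<phi> z \<le> s * \<phi> x + (1-s) * \<phi> z - \<kappa>/2 * s * (1-s) * (norm (x-z))\<^sup>2"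
    using zmin by force
  hence "s * (\<kappa>/2*(norm (x-z))\<^sup>2 * (1-s)) \<le> s * (\<phi> x - \<phi> z)" by (simp add: algebra_simps)
  thus "\<kappa>/2*(norm (x-z))\<^sup>2 * (1-s) \<le> \<phi> x - \<phi> z" using s by (simp add: mult_le_cancel_left_pos)
qed

lemma epi_real:
  assumes "\<And>x. f x \<noteq> -\<infinity>"
  shows "epigraph f = {(x,t). x \<in> edom f \<and> real_of_ereal (f x) \<le> t}"
  unfolding epigraph_def edom_def
proof (safe)
  fix x t assume "f x \<le> ereal t" thus "f x < \<infinity>" by auto
  thus "real_of_ereal (f x) \<le> t" using \<open>f x \<le> ereal t\<close> assms[of x] by (cases "f x") auto
next
  fix x t assume "f x < \<infinity>" "real_of_ereal (f x) \<le> t" thus "f x \<le> ereal t"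
    using assms[of x] by (cases "f x") auto
qed

lemma conv2:
  assumes nm: "\<And>x. f x \<noteq> -\<infinity>" and cf: "convex_fun f"
    and x: "x \<in> edom f" and y: "y \<in> edom f" and t: "0 \<le> t" "t \<le> 1"
  shows "t *\<^sub>R x + (1-t) *\<^sub>R y \<in> edom f \<and>
     real_of_ereal (f (t *\<^sub>R x + (1-t) *\<^sub>R y)) \<le> t * real_of_ereal (f x) + (1-t) * real_of_ereal (f y)"
proof -
  have E: "epigraph f = {(x,t). x \<in> edom f \<and> real_of_ereal (f x) \<le> t}" by (rule epi_real[OF nm])
  have "(x, real_of_ereal (f x)) \<in> epigraph f" "(y, real_of_ereal (f y)) \<in> epigraph f"
    using x y by (auto simp: E)
  from convexD[OF cf[unfolded convex_fun_def] this, of t "1-t"] t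
  show ?thesis by (simp add: E)
qed

lemma affine_minorant:
  fixes f :: "'a::euclidean_space \<Rightarrow> ereal"
  assumes nm: "\<And>x. f x \<noteq> -\<infinity>" and ne: "edom f \<noteq> {}" and cl: "closed_fun f" and cf: "convex_fun f"
  shows "\<exists>a b. \<forall>x\<in>edom f. b + inner a x \<le> real_of_ereal (f x)"
proof -
  have E: "epigraph f = {(x,t). x \<in> edom f \<and> real_of_ereal (f x) \<le> t}" by (rule epi_real[OF nm])
  obtain x0 where x0: "x0 \<in> edom f" using ne by auto
  have "(x0, real_of_ereal (f x0) - 1) \<notin> epigraph f" by (simp add: E)
  then obtain A \<beta> where A: "inner A (x0, real_of_ereal (f x0) - 1) < \<beta>" and
     B: "\<forall>w\<in>epigraph f. inner A w > \<beta>"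
    using separating_hyperplane_closed_point[OF cf[unfolded convex_fun_def] cl[unfolded closed_fun_def]] by blast
  obtain a s where As: "A = (a, s)" by (cases A)
  have "(x0, real_of_ereal (f x0)) \<in> epigraph f" using x0 by (simp add: E)
  with B A As have "inner a x0 + s * (real_of_ereal (f x0) - 1) < inner a x0 + s * real_of_ereal (f x0)" by force
  hence sp: "s > 0" by (simp add: algebra_simps)
  show ?thesis
  proof (intro exI ballI)
    fix x assume x: "x \<in> edom f"
    hence "(x, real_of_ereal (f x)) \<in> epigraph f" by (simp add: E)
    with B As have "\<beta> < inner a x + s * real_of_ereal (f x)" by force
    hence "\<beta> / s - inner a x / s < real_of_ereal (f x)" using sp by (simp add: field_simps)
    thus "\<beta> / s + inner (- a /\<^sub>R s) x \<le> real_of_ereal (f x)" by (simp add: inner_simps divide_inverse mult.commute)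
  qed
qed

lemma coercive_min:
  fixes f :: "'a::euclidean_space \<Rightarrow> ereal" and h :: "'a \<Rightarrow> real"
  assumes nm: "\<And>x. f x \<noteq> -\<infinity>" and cl: "closed_fun f"
    and S: "closed S" and hc: "\<And>x. continuous (at x) h"
    and x0: "x0 \<in> S" "x0 \<in> edom f" and kp: "\<kappa> > 0"
    and gr: "\<And>x. x \<in> edom f \<Longrightarrow> \<kappa>/2 * (norm (x-q))\<^sup>2 + inner a x + b \<le> h x + real_of_ereal (f x)"
  shows "\<exists>z\<in>S. z \<in> edom f \<and> (\<forall>x\<in>S. x \<in> edom f \<longrightarrow> h z + real_of_ereal (f z) \<le> h x + real_of_ereal (f x))"
proof -
  define f2 where "f2 = (\<lambda>x. real_of_ereal (f x))"
  have E: "epigraph f = {(x,t). x \<in> edom f \<and> f2 x \<le> t}" unfolding f2_def by (rule epi_real[OF nm])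
  define K where "K = h x0 + f2 x0"
  define M where "M = K - b + norm a * norm q"
  define R where "R = 1 + 2*(norm a + \<bar>M\<bar>)/\<kappa> + norm q"
  have c1: "norm x \<le> R" if x: "x \<in> edom f" "h x + f2 x \<le> K" for x
  proof -
    define r where "r = norm (x - q)"
    have "- inner a x \<le> norm a * norm x" using norm_cauchy_schwarz[of "-a" x] by simp
    also have "norm x \<le> r + norm q" unfolding r_def by (metis norm_triangle_sub add.commute)
    hence "norm a * norm x \<le> norm a * (r + norm q)" by (simp add: mult_left_mono)
    finally have ia: "- inner a x \<le> norm a * r + norm a * norm q" by (simp add: algebra_simps)
    have "\<kappa>/2 * r\<^sup>2 \<le> K - b - inner a x" using gr[OF x(1)] x(2) unfolding r_def f2_def by simp
    hence k1: "\<kappa>/2 * r\<^sup>2 \<le> M + norm a * r" using ia unfolding M_def by simp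
    have "r \<le> 1 + 2*(norm a + \<bar>M\<bar>)/\<kappa>"
    proof (cases "r \<le> 1")
      case True thus ?thesis using kp by (simp add: add_increasing2)
    next
      case False
      hence "M + norm a * r \<le> (\<bar>M\<bar> + norm a) * r" 
        by (smt (verit) mult_le_cancel_left1 norm_ge_zero distrib_right)
      with k1 have "\<kappa>/2 * r * r \<le> (\<bar>M\<bar> + norm a) * r" by (simp add: power2_eq_square)
      hence "\<kappa>/2 * r \<le> \<bar>M\<bar> + norm a" using False by simp
      hence "r \<le> 2*(norm a + \<bar>M\<bar>)/\<kappa>" using kp by (simp add: field_simps)
      thus ?thesis by simp
    qed
    moreover have "norm x \<le> r + norm q" unfolding r_def by (metis norm_triangle_sub add.commute)
    ultimately show ?thesis unfolding R_def by simp
  qed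
  have c2: "b - norm a * R \<le> h x + f2 x" if x: "x \<in> edom f" "norm x \<le> R" for x
  proof -
    have "- inner a x \<le> norm a * norm x" using norm_cauchy_schwarz[of "-a" x] by simp
    also have "\<dots> \<le> norm a * R" using x(2) by (simp add: mult_left_mono)
    finally have "b - norm a * R \<le> inner a x + b" by simp
    also have "\<dots> \<le> \<kappa>/2 * (norm (x-q))\<^sup>2 + inner a x + b" using kp by simp
    also have "\<dots> \<le> h x + f2 x" using gr[OF x(1)] unfolding f2_def .
    finally show ?thesis .
  qed
  define Ks where "Ks = (\<lambda>p. (fst p, snd p - h (fst p))) -` epigraph f \<inter> (S \<times> UNIV) \<inter> {p. snd p \<le> K}"
  have Kmem: "p \<in> Ks \<longleftrightarrow> fst p \<in> S \<and> fst p \<in> edom f \<and> f2 (fst p) \<le> snd p - h (fst p) \<and> snd p \<le> K" for p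
    by (cases p) (auto simp: Ks_def E)
  have "closed Ks" unfolding Ks_def
  proof (intro closed_Int closed_Times S closed_UNIV)
    show "closed ((\<lambda>p. (fst p, snd p - h (fst p))) -` epigraph f)"
      by (intro continuous_closed_vimage cl[unfolded closed_fun_def] continuous_intros
            continuous_at_compose[OF _ hc, unfolded o_def] )
    show "closed {p::'a\<times>real. snd p \<le> K}" by (intro closed_Collect_le continuous_intros)
  qed
  moreover have "bounded Ks"
  proof (rule bounded_subset)
    show "bounded (cball 0 R \<times> {b - norm a * R .. K})" by (intro bounded_Times) auto
    show "Ks \<subseteq> cball 0 R \<times> {b - norm a * R .. K}"
    proof
      fix p assume p: "p \<in> Ks"
      hence m: "fst p \<in> edom f" "f2 (fst p) \<le> snd p - h (fst p)" "snd p \<le> K" by (auto simp: Kmem)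
      hence n: "norm (fst p) \<le> R" using c1[of "fst p"] by simp
      have "b - norm a * R \<le> snd p" using c2[OF m(1) n] m(2) by simp
      with n m(3) show "p \<in> cball 0 R \<times> {b - norm a * R .. K}" by (cases p) auto
    qed
  qed
  ultimately have "compact Ks" by (simp add: compact_eq_bounded_closed)
  moreover have x0K: "(x0, K) \<in> Ks" using x0 by (simp add: Kmem K_def)
  ultimately obtain p where p: "p \<in> Ks" and pm: "\<And>w. w \<in> Ks \<Longrightarrow> snd p \<le> snd w"
  proof -
    have "\<exists>x\<in>Ks. \<forall>y\<in>Ks. snd x \<le> snd y"
      using continuous_attains_inf[of Ks snd] \<open>compact Ks\<close> x0K continuous_on_snd[OF continuous_on_id] by blast
    thus ?thesis using that by blast
  qed
  have pK: "snd p \<le> K" using pm[OF x0K] by simp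
  show ?thesis
  proof (intro bexI conjI ballI impI)
    show "fst p \<in> S" "fst p \<in> edom f" using p by (auto simp: Kmem)
    fix x assume x: "x \<in> S" "x \<in> edom f"
    have "h (fst p) + f2 (fst p) \<le> snd p" using p by (simp add: Kmem)
    also have "snd p \<le> h x + f2 x"
    proof (cases "h x + f2 x \<le> K")
      case True
      hence "(x, h x + f2 x) \<in> Ks" using x by (simp add: Kmem)
      from pm[OF this] show ?thesis by simp
    qed (use pK in auto)
    finally show "h (fst p) + real_of_ereal (f (fst p)) \<le> h x + real_of_ereal (f x)" unfolding f2_def .
  qed
qed

lemma lim_arg2:
  fixes A B X :: real
  assumes "\<And>s. 0 < s \<Longrightarrow> s \<le> 1 \<Longrightarrow> A - s * B \<le> X"
  shows "A \<le> X"
proof (rule ccontr)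
  assume nA: "\<not> A \<le> X"
  define s where "s = min 1 ((A - X) / (2 * (\<bar>B\<bar> + 1)))"
  have s0: "0 < s" "s \<le> 1" using nA by (auto simp: s_def)
  have "s * B \<le> s * \<bar>B\<bar>" using s0 by (simp add: mult_left_mono)
  also have "s * \<bar>B\<bar> \<le> (A - X) / (2 * (\<bar>B\<bar> + 1)) * \<bar>B\<bar>" unfolding s_def by (intro mult_right_mono) auto
  also have "\<dots> < (A - X)"
  proof -
    have "(A - X) * \<bar>B\<bar> < (A - X) * (2*(\<bar>B\<bar>+1))" using nA by (intro mult_strict_left_mono) auto
    thus ?thesis by (simp add: field_simps)
  qed
  finally have "A - s * B > X" by simp
  with assms[OF s0] show False by simp
qed

lemma norm_add_scale_sq:
  fixes u v :: "'a::real_inner"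
  shows "(norm (u + t *\<^sub>R v))\<^sup>2 = (norm u)\<^sup>2 + 2 * t * inner u v + t\<^sup>2 * (norm v)\<^sup>2"
  unfolding power2_norm_eq_inner by (simp add: inner_simps inner_commute algebra_simps power2_eq_square)

lemma prox_subgrad:
  fixes f :: "'a::euclidean_space \<Rightarrow> ereal"
  assumes nm: "\<And>x. f x \<noteq> -\<infinity>" and cf: "convex_fun f" and z: "z \<in> edom f"
    and zmin: "\<And>x. x \<in> edom f \<Longrightarrow> real_of_ereal (f z) + c/2 * (norm (z-p))\<^sup>2 \<le> real_of_ereal (f x) + c/2 * (norm (x-p))\<^sup>2"
    and x: "x \<in> edom f"
  shows "real_of_ereal (f z) + inner (c *\<^sub>R (p - z)) (x - z) \<le> real_of_ereal (f x)"
proof (rule lim_arg2)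
  define f2 where "f2 = (\<lambda>x. real_of_ereal (f x))"
  fix t :: real assume t: "0 < t" "t \<le> 1"
  define zt where "zt = t *\<^sub>R x + (1-t) *\<^sub>R z"
  have cv: "zt \<in> edom f" "f2 zt \<le> t * f2 x + (1-t) * f2 z"
    using conv2[OF nm cf x z, of t] t unfolding zt_def f2_def by auto
  have eq: "zt - p = (z - p) + t *\<^sub>R (x - z)" unfolding zt_def by (simp add: algebra_simps)
  have nz: "(norm (zt - p))\<^sup>2 = (norm (z-p))\<^sup>2 + 2 * t * inner (z-p) (x-z) + t\<^sup>2 * (norm (x-z))\<^sup>2"
    unfolding eq by (rule norm_add_scale_sq)
  have "f2 z + c/2 * (norm (z-p))\<^sup>2 \<le> f2 zt + c/2 * (norm (zt-p))\<^sup>2" using zmin[OF cv(1)] unfolding f2_def .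
  also have "\<dots> \<le> t * f2 x + (1-t) * f2 z + c/2 * ((norm (z-p))\<^sup>2 + 2 * t * inner (z-p) (x-z) + t\<^sup>2 * (norm (x-z))\<^sup>2)"
    using cv(2) nz by simp
  finally have "t * (f2 z + c * inner (p-z) (x-z) - t * (c/2 * (norm (x-z))\<^sup>2)) \<le> t * f2 x"
    by (simp add: algebra_simps inner_diff_left inner_diff_right power2_eq_square)
  hence "f2 z + c * inner (p-z) (x-z) - t * (c/2 * (norm (x-z))\<^sup>2) \<le> f2 x" using t by simp
  thus "real_of_ereal (f z) + inner (c *\<^sub>R (p - z)) (x - z) - t * (c/2 * (norm (x-z))\<^sup>2) \<le> real_of_ereal (f x)"
    unfolding f2_def by simp
qed

lemma small_r:
  fixes r c M n e :: real
  assumes c1: "c \<ge> 1" and r0: "r \<ge> 0" and n0: "n \<ge> 0"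
    and k: "c/2 * r\<^sup>2 \<le> \<bar>M\<bar> + n * r"
  shows "r\<^sup>2 < (4*\<bar>M\<bar> + 16*n\<^sup>2 + 1) / c"
proof (cases "n * r \<le> \<bar>M\<bar>")
  case True
  hence "c/2 * r\<^sup>2 \<le> 2*\<bar>M\<bar>" using k by simp
  hence "c * r\<^sup>2 \<le> 4*\<bar>M\<bar>" by simp
  also have "\<dots> < 4*\<bar>M\<bar> + 16*n\<^sup>2 + 1" using zero_le_power2[of n] by linarith
  finally show ?thesis using c1 by (simp add: field_simps)
next
  case False
  hence rp: "r > 0" using r0 n0 by (cases "r = 0") auto
  from False k have "c/2 * r * r < 2 * n * r" by (simp add: power2_eq_square)
  hence "c/2 * r < 2 * n" using rp by simp
  hence "c * r < 4 * n" by simp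
  hence "(c * r)\<^sup>2 < (4*n)\<^sup>2" using rp c1 by (intro power_strict_mono) auto
  hence "c * (c * r\<^sup>2) < 16 * n\<^sup>2" by (simp add: power2_eq_square algebra_simps)
  moreover have "c * r\<^sup>2 \<le> c * (c * r\<^sup>2)" using c1 mult_right_mono[of 1 c "c*r\<^sup>2"] by simp
  ultimately have "c * r\<^sup>2 < 4*\<bar>M\<bar> + 16*n\<^sup>2 + 1" by simp
  thus ?thesis using c1 by (simp add: field_simps)
qed

lemma strong_conv:
  fixes f :: "'a::euclidean_space \<Rightarrow> ereal"
  assumes nm: "\<And>x. f x \<noteq> -\<infinity>" and ne: "edom f \<noteq> {}" and cl: "closed_fun f" and cf: "convex_fun f"
    and st: "strongly_convex_sg f \<mu>" and mu: "\<mu> \<ge> 0"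
    and x: "x \<in> edom f" and y: "y \<in> edom f" and t: "0 \<le> t" "t \<le> 1"
  shows "real_of_ereal (f (t *\<^sub>R x + (1-t) *\<^sub>R y)) \<le> t * real_of_ereal (f x) + (1-t) * real_of_ereal (f y)
          - \<mu>/2 * t * (1-t) * (norm (x-y))\<^sup>2"
proof -
  define f2 where "f2 = (\<lambda>x. real_of_ereal (f x))"
  define p where "p = t *\<^sub>R x + (1-t) *\<^sub>R y"
  have pD: "p \<in> edom f" using conv2[OF nm cf x y t] unfolding p_def by simp
  obtain a b where ab: "\<And>x. x \<in> edom f \<Longrightarrow> b + inner a x \<le> f2 x"
    using affine_minorant[OF nm ne cl cf] unfolding f2_def by blast
  have E: "epigraph f = {(x,t). x \<in> edom f \<and> f2 x \<le> t}" unfolding f2_def by (rule epi_real[OF nm])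
  have fe: "f w = ereal (f2 w)" if "w \<in> edom f" for w
    using that nm[of w] unfolding edom_def f2_def by (cases "f w") auto
  define T where "T = t * f2 x + (1-t) * f2 y - \<mu>/2 * t * (1-t) * (norm (x-y))\<^sup>2"
  have "(p, T) \<in> epigraph f"
  proof (rule closed_approachable[OF cl[unfolded closed_fun_def], THEN iffD1], intro allI impI)
    fix e :: real assume e: "e > 0"
    define Mp where "Mp = f2 p - b - inner a p"
    define W where "W = 4*\<bar>Mp\<bar> + 16*(norm a)\<^sup>2 + 1"
    define c where "c = max 1 (2*W/e\<^sup>2)"
    have c1: "c \<ge> 1" unfolding c_def by simp
    have cp: "c > 0" using c1 by simp
    obtain z where zD: "z \<in> edom f" and
      zmin0: "\<And>w. w \<in> edom f \<Longrightarrow> c/2 * (norm (z-p))\<^sup>2 + f2 z \<le> c/2 * (norm (w-p))\<^sup>2 + f2 w"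
      using coercive_min[OF nm cl closed_UNIV, of "\<lambda>x. c/2 * (norm (x-p))\<^sup>2" p c p a b] pD cp ab
      unfolding f2_def by (auto intro!: continuous_intros simp: algebra_simps)
    define g where "g = c *\<^sub>R (p - z)"
    have sg0: "f2 z + inner g (w - z) \<le> f2 w" if "w \<in> edom f" for w
      unfolding g_def f2_def
      by (rule prox_subgrad[OF nm cf zD _ that]) (use zmin0 in \<open>auto simp: f2_def algebra_simps\<close>)
    have gsub: "g \<in> subdiff f z" unfolding subdiff_def
    proof (safe)
      fix w show "f z + ereal (inner g (w - z)) \<le> f w"
      proof (cases "w \<in> edom f")
        case True thus ?thesis using sg0[OF True] fe[OF True] fe[OF zD] by simp
      next
        case False hence "f w = \<infinity>" unfolding edom_def by simp
        thus ?thesis by simp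
      qed
    qed
    have sx: "inner g (x - z) + \<mu>/2 * (norm (x-z))\<^sup>2 \<le> f2 x - f2 z"
      using st x zD gsub unfolding strongly_convex_sg_def f2_def by blast
    have sy: "inner g (y - z) + \<mu>/2 * (norm (y-z))\<^sup>2 \<le> f2 y - f2 z"
      using st y zD gsub unfolding strongly_convex_sg_def f2_def by blast
    have comb: "t * (inner g (x - z) + \<mu>/2 * (norm (x-z))\<^sup>2) + (1-t) * (inner g (y - z) + \<mu>/2 * (norm (y-z))\<^sup>2)
        \<le> t * (f2 x - f2 z) + (1-t) * (f2 y - f2 z)"
      using t sx sy by (intro add_mono mult_left_mono) auto
    have pz: "t *\<^sub>R (x - z) + (1-t) *\<^sub>R (y - z) = p - z" unfolding p_def by (simp add: algebra_simps)
    have gp: "t * inner g (x - z) + (1-t) * inner g (y - z) = inner g (p - z)"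
      unfolding pz[symmetric] by (simp add: inner_simps)
    have gp0: "inner g (p - z) \<ge> 0" unfolding g_def using cp by simp
    have nq: "t * (norm (x-z))\<^sup>2 + (1-t) * (norm (y-z))\<^sup>2 = (norm (p-z))\<^sup>2 + t*(1-t)*(norm (x-y))\<^sup>2"
      using norm_comb_sq[of t "x-z" "y-z"] unfolding pz by simp
    have "f2 z + \<mu>/2 * (t*(1-t)*(norm (x-y))\<^sup>2) \<le> t * f2 x + (1-t) * f2 y"
    proof -
      have "t * (inner g (x - z) + \<mu>/2 * (norm (x-z))\<^sup>2) + (1-t) * (inner g (y - z) + \<mu>/2 * (norm (y-z))\<^sup>2)
          = inner g (p - z) + \<mu>/2 * ((norm (p-z))\<^sup>2 + t*(1-t)*(norm (x-y))\<^sup>2)"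
      proof -
        have lin: "t*(A1 + m*B1) + (1-t)*(A2+m*B2) = (t*A1+(1-t)*A2) + m*(t*B1+(1-t)*B2)" for A1 A2 B1 B2 m :: real
          by (simp add: algebra_simps)
        show ?thesis unfolding lin gp nq ..
      qed
      also have "\<dots> \<ge> \<mu>/2 * (t*(1-t)*(norm (x-y))\<^sup>2)" using gp0 mu mult_nonneg_nonneg[OF mu zero_le_power2[of "norm (p-z)"]] by (simp add: distrib_left)
      finally show ?thesis using comb by (simp add: algebra_simps)
    qed
    hence fzT: "f2 z \<le> T" unfolding T_def by (simp add: field_simps)
    have "c/2 * (norm (z-p))\<^sup>2 \<le> f2 p - f2 z" using zmin0[OF pD] by simp
    also have "\<dots> \<le> Mp + inner a (p - z)" using ab[OF zD] unfolding Mp_def by (simp add: inner_simps)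
    also have "\<dots> \<le> \<bar>Mp\<bar> + norm a * norm (z - p)"
      using norm_cauchy_schwarz[of a "p-z"] by (simp add: norm_minus_commute)
    finally have "(norm (z-p))\<^sup>2 < W / c" unfolding W_def by (intro small_r c1) auto
    also have "W / c \<le> e\<^sup>2 / 2"
    proof -
      have "2*W/e\<^sup>2 \<le> c" unfolding c_def by simp
      hence "2*W \<le> c * e\<^sup>2" using e by (simp add: field_simps)
      thus ?thesis using cp by (simp add: field_simps)
    qed
    also have "\<dots> < e\<^sup>2" using e by simp
    finally have "norm (z-p) < e" using e by (simp add: power_less_imp_less_base) 
    moreover have "(z, T) \<in> epigraph f" using zD fzT by (simp add: E)
    ultimately show "\<exists>w\<in>epigraph f. dist w (p, T) < e"
      by (intro bexI[of _ "(z,T)"]) (auto simp: dist_Pair_Pair dist_norm)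
  qed
  thus ?thesis unfolding E T_def p_def f2_def by simp
qed

lemma grad_ineq:
  fixes f :: "'a::real_inner \<Rightarrow> real"
  assumes cv: "convex_on UNIV f" and d: "\<And>x. (f has_derivative (\<lambda>h. inner (G x) h)) (at x)"
  shows "f y + inner (G y) (x - y) \<le> f x"
proof -
  define v where "v = x - y"
  define \<phi> where "\<phi> = (\<lambda>s::real. f (y + s *\<^sub>R v))"
  have lin: "((\<lambda>s::real. y + s *\<^sub>R v) has_derivative (\<lambda>s. s *\<^sub>R v)) (at 0)"
    by (auto intro!: derivative_eq_intros)
  have "(\<phi> has_derivative (\<lambda>s. inner (G y) (s *\<^sub>R v))) (at 0)"
    unfolding \<phi>_def using has_derivative_compose[OF lin d[of "y + 0 *\<^sub>R v"]] by simp
  moreover have "(\<lambda>s. inner (G y) (s *\<^sub>R v)) = (*) (inner (G y) v)" by (auto simp: mult.commute)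
  ultimately have dd: "(\<phi> has_field_derivative (inner (G y) v)) (at 0 within UNIV)"
    unfolding has_field_derivative_def by simp
  have cphi: "convex_on UNIV \<phi>"
  proof (rule convex_onI)
    fix t a b :: real assume "t > 0" "t < 1"
    have "y + ((1 - t) *\<^sub>R a + t *\<^sub>R b) *\<^sub>R v = (1-t) *\<^sub>R (y + a *\<^sub>R v) + t *\<^sub>R (y + b *\<^sub>R v)"
      by (simp add: algebra_simps)
    thus "\<phi> ((1 - t) *\<^sub>R a + t *\<^sub>R b) \<le> (1 - t) * \<phi> a + t * \<phi> b"
      unfolding \<phi>_def using convex_onD[OF cv, of t] \<open>t > 0\<close> \<open>t < 1\<close> by simp
  qed simp
  have "\<phi> 1 - \<phi> 0 \<ge> inner (G y) v * (1 - 0)"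
    by (rule convex_on_imp_above_tangent[OF cphi]) (use dd in auto)
  thus ?thesis unfolding \<phi>_def v_def by simp
qed

lemma key_ineq:
  fixes f :: "'a::euclidean_space \<Rightarrow> ereal" and f1 :: "'a \<Rightarrow> real"
  assumes nm: "\<And>x. f x \<noteq> -\<infinity>" and ne: "edom f \<noteq> {}" and cl: "closed_fun f" and cf: "convex_fun f"
    and st: "strongly_convex_sg f \<mu>" and mu: "\<mu> \<ge> 0"
    and cv1: "convex_on UNIV f1" and d: "\<And>x. (f1 has_derivative (\<lambda>h. inner (G x) h)) (at x)"
    and U: "convex U" and Lk: "Lk > 0"
    and zm: "is_argmin_on U (prox_model f1 G f Lk y) z"
    and desc: "f1 z \<le> f1 y + inner (G y) (z - y) + Lk/2 * (norm (z - y))\<^sup>2"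
    and x: "x \<in> U" "x \<in> edom f"
  shows "z \<in> edom f \<and> f1 z + real_of_ereal (f z) + (Lk+\<mu>)/2 * (norm (x-z))\<^sup>2
           \<le> f1 x + real_of_ereal (f x) + Lk/2 * (norm (x-y))\<^sup>2"
proof -
  define f2 where "f2 = (\<lambda>x. real_of_ereal (f x))"
  have fe: "f w = ereal (f2 w)" if "w \<in> edom f" for w
    using that nm[of w] unfolding edom_def f2_def by (cases "f w") auto
  define q where "q = (\<lambda>w. f1 y + inner (G y) (w - y) + Lk/2 * (norm (w - y))\<^sup>2)"
  define m where "m = (\<lambda>w. q w + f2 w)"
  have pm: "prox_model f1 G f Lk y w = ereal (m w)" if "w \<in> edom f" for w
    unfolding prox_model_def m_def q_def using fe[OF that] by simp
  have zU: "z \<in> U" and zle: "\<And>w. w \<in> U \<Longrightarrow> prox_model f1 G f Lk y z \<le> prox_model f1 G f Lk y w"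
    using zm unfolding is_argmin_on_def by auto
  have zD: "z \<in> edom f"
  proof (rule ccontr)
    assume "z \<notin> edom f"
    hence "f z = \<infinity>" unfolding edom_def by simp
    hence "prox_model f1 G f Lk y z = \<infinity>" unfolding prox_model_def by simp
    with zle[OF x(1)] pm[OF x(2)] show False by simp
  qed
  define S where "S = U \<inter> edom f"
  have sc: "t *\<^sub>R a + (1-t) *\<^sub>R b \<in> S \<and>
      m (t *\<^sub>R a + (1-t) *\<^sub>R b) \<le> t * m a + (1-t) * m b - (Lk+\<mu>)/2 * t * (1-t) * (norm (a-b))\<^sup>2"
    if ab: "a \<in> S" "b \<in> S" and t: "0 \<le> t" "t \<le> 1" for a b t
  proof
    show "t *\<^sub>R a + (1-t) *\<^sub>R b \<in> S"
      using ab conv2[OF nm cf _ _ t, of a b] convexD[OF U, of a b t "1-t"] t unfolding S_def by auto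
    have f2c: "f2 (t *\<^sub>R a + (1-t) *\<^sub>R b) \<le> t * f2 a + (1-t) * f2 b - \<mu>/2 * t * (1-t) * (norm (a-b))\<^sup>2"
      using strong_conv[OF nm ne cl cf st mu _ _ t, of a b] ab unfolding S_def f2_def by auto
    have e1: "t *\<^sub>R a + (1-t) *\<^sub>R b - y = t *\<^sub>R (a - y) + (1-t) *\<^sub>R (b - y)" by (simp add: algebra_simps)
    have nq: "(norm (t *\<^sub>R a + (1-t) *\<^sub>R b - y))\<^sup>2 = t*(norm (a-y))\<^sup>2 + (1-t)*(norm (b-y))\<^sup>2 - t*(1-t)*(norm (a-b))\<^sup>2"
      unfolding e1 norm_comb_sq by simp
    have lq: "inner (G y) (t *\<^sub>R a + (1-t) *\<^sub>R b - y) = t * inner (G y) (a - y) + (1-t) * inner (G y) (b - y)"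
      unfolding e1 by (simp add: inner_simps)
    have qc: "q (t *\<^sub>R a + (1-t) *\<^sub>R b) = t * q a + (1-t) * q b - Lk/2 * t * (1-t) * (norm (a-b))\<^sup>2"
      unfolding q_def lq nq by (simp add: field_simps)
    show "m (t *\<^sub>R a + (1-t) *\<^sub>R b) \<le> t * m a + (1-t) * m b - (Lk+\<mu>)/2 * t * (1-t) * (norm (a-b))\<^sup>2"
      unfolding m_def using qc f2c by (simp add: field_simps)
  qed
  have zS: "z \<in> S" using zU zD S_def by simp
  have zmin: "m z \<le> m w" if "w \<in> S" for w
    using zle[of w] that pm[of w] pm[OF zD] unfolding S_def by simp
  have xS: "x \<in> S" using x S_def by simp
  have "(Lk+\<mu>)/2 * (norm (x-z))\<^sup>2 \<le> m x - m z"
    by (rule sc_min[where S=S]) (use sc zS zmin xS in auto)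
  moreover have "m x \<le> f1 x + f2 x + Lk/2 * (norm (x-y))\<^sup>2"
    using grad_ineq[OF cv1 d, of y x] unfolding m_def q_def by simp
  moreover have "f1 z + f2 z \<le> m z" using desc unfolding m_def q_def by simp
  ultimately show ?thesis using zD unfolding f2_def by simp
qed

lemma young_ineq:
  fixes a w :: "'a::real_inner"
  assumes mu: "\<mu> > 0" and L: "L \<ge> 0"
  shows "L * inner a w \<le> \<mu>/2 * (norm a)\<^sup>2 + L\<^sup>2/(2*\<mu>) * (norm w)\<^sup>2"
proof -
  have "L * inner a w \<le> L * (norm a * norm w)" using L norm_cauchy_schwarz[of a w] by (simp add: mult_left_mono)
  moreover have "L * (norm a * norm w) \<le> \<mu>/2 * (norm a)\<^sup>2 + L\<^sup>2/(2*\<mu>) * (norm w)\<^sup>2"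
  proof -
    have "0 \<le> (\<mu> * norm a - L * norm w)\<^sup>2" by simp
    hence k: "2*\<mu>*(L*(norm a * norm w)) \<le> \<mu>\<^sup>2 * (norm a)\<^sup>2 + L\<^sup>2 * (norm w)\<^sup>2"
      by (simp add: power2_diff power_mult_distrib algebra_simps)
    hence "L * (norm a * norm w) \<le> (\<mu>\<^sup>2 * (norm a)\<^sup>2 + L\<^sup>2 * (norm w)\<^sup>2) / (2*\<mu>)"
      using mu by (simp add: pos_le_divide_eq mult.commute mult.left_commute)
    also have "\<dots> = \<mu>/2 * (norm a)\<^sup>2 + L\<^sup>2/(2*\<mu>) * (norm w)\<^sup>2"
      using mu by (simp add: field_simps power2_eq_square)
    finally show ?thesis .
  qed
  ultimately show ?thesis by linarith
qed

lemma norm_diff_sq_le: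
  fixes d e :: "'a::real_normed_vector"
  shows "(norm (d - e))\<^sup>2 \<le> 2 * (norm d)\<^sup>2 + 2 * (norm e)\<^sup>2"
proof -
  have "norm (d - e) \<le> norm d + norm e" by (rule norm_triangle_ineq4)
  hence "(norm (d - e))\<^sup>2 \<le> (norm d + norm e)\<^sup>2" by (simp add: power_mono)
  also have "\<dots> \<le> 2 * (norm d)\<^sup>2 + 2 * (norm e)\<^sup>2"
  proof -
    have "0 \<le> (norm d - norm e)\<^sup>2" by simp
    thus ?thesis by (simp add: power2_eq_square algebra_simps)
  qed
  finally show ?thesis .
qed

theorem theorem1:
  fixes U :: "(real^'m) set"
    and \<xi>1 :: "real^'m \<Rightarrow> real" and G :: "real^'m \<Rightarrow> real^'m"
    and \<xi>2 :: "real^'m \<Rightarrow> ereal"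
    and Lip \<mu> :: real
    and L \<omega> :: "nat \<Rightarrow> real"
    and u v uh :: "nat \<Rightarrow> real^'m"
  assumes U_ne: "U \<noteq> {}" and U_closed: "closed U" and U_convex: "convex U"
    and xi1_convex: "convex_on UNIV \<xi>1"
    and xi1_grad: "\<And>x. (\<xi>1 has_derivative (\<lambda>h. G x \<bullet> h)) (at x)"
    and Lip_pos: "Lip > 0"
    and G_Lip: "\<And>x y. norm (G x - G y) \<le> Lip * norm (x - y)"
    and xi2_proper: "proper_fun \<xi>2" and xi2_closed: "closed_fun \<xi>2"
    and xi2_convex: "convex_fun \<xi>2"
    and mu_pos: "\<mu> > 0" and xi2_strong: "strongly_convex_sg \<xi>2 \<mu>"
    and u0: "u 0 \<in> U \<inter> edom \<xi>2"
    and L_range: "\<And>k. 0 < L k \<and> L k \<le> Lip"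
    and \<omega>_range: "\<And>k. k \<ge> 1 \<Longrightarrow> 0 \<le> \<omega> (k - 1) \<and> \<omega> (k - 1) \<le> sqrt (L (k - 1) / L k)"
    and first_try: "\<And>k. k \<ge> 1 \<Longrightarrow>
        is_argmin_on U (prox_model \<xi>1 G \<xi>2 (L k)
                         (u (k - 1) + \<omega> (k - 1) *\<^sub>R (u (k - 1) - u (k - 2)))) (v k)"
    and accept: "\<And>k. k \<ge> 1 \<Longrightarrow>
        ereal (\<xi>1 (v k)) + \<xi>2 (v k) \<le> ereal (\<xi>1 (u (k - 1))) + \<xi>2 (u (k - 1)) \<Longrightarrow>
        u k = v k \<and> uh k = u (k - 1) + \<omega> (k - 1) *\<^sub>R (u (k - 1) - u (k - 2))"
    and restart: "\<And>k. k \<ge> 1 \<Longrightarrow>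
        ereal (\<xi>1 (v k)) + \<xi>2 (v k) > ereal (\<xi>1 (u (k - 1))) + \<xi>2 (u (k - 1)) \<Longrightarrow>
        uh k = u (k - 1) \<and> is_argmin_on U (prox_model \<xi>1 G \<xi>2 (L k) (u (k - 1))) (u k)"
    and descent: "\<And>k. k \<ge> 1 \<Longrightarrow>
        \<xi>1 (u k) \<le> \<xi>1 (uh k) + G (uh k) \<bullet> (u k - uh k) + L k / 2 * (norm (u k - uh k))\<^sup>2"
  shows "\<exists>us. is_argmin_on U (\<lambda>x. ereal (\<xi>1 x) + \<xi>2 x) us
            \<and> (\<forall>z. is_argmin_on U (\<lambda>x. ereal (\<xi>1 x) + \<xi>2 x) z \<longrightarrow> z = us)
            \<and> (\<exists>C \<tau>. C > 0 \<and> 0 < \<tau> \<and> \<tau> < 1 \<and> (\<forall>k. norm (u k - us) \<le> C * \<tau> ^ k))"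
proof -
  define f2 where "f2 = (\<lambda>x. real_of_ereal (\<xi>2 x))"
  define F where "F = (\<lambda>x. \<xi>1 x + f2 x)"
  have nm: "\<And>x. \<xi>2 x \<noteq> -\<infinity>" and ne: "edom \<xi>2 \<noteq> {}" using xi2_proper unfolding proper_fun_def by auto
  have mu0: "\<mu> \<ge> 0" using mu_pos by simp
  have fe: "\<xi>2 w = ereal (f2 w)" if "w \<in> edom \<xi>2" for w
    using that nm[of w] unfolding edom_def f2_def by (cases "\<xi>2 w") auto
  have cont1: "\<And>x. continuous (at x) \<xi>1" using xi1_grad has_derivative_continuous by blast
  obtain a b where ab: "\<And>x. x \<in> edom \<xi>2 \<Longrightarrow> b + inner a x \<le> f2 x"
    using affine_minorant[OF nm ne xi2_closed xi2_convex] unfolding f2_def by blast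
  have u0U: "u 0 \<in> U" and u0D: "u 0 \<in> edom \<xi>2" using u0 by auto
  have gr: "(\<mu>/2)/2 * (norm (x - u 0))\<^sup>2 + inner (a + G (u 0)) x
      + (2*b + inner a (u 0) - f2 (u 0) + \<xi>1 (u 0) - inner (G (u 0)) (u 0)) \<le> \<xi>1 x + f2 x"
    if x: "x \<in> edom \<xi>2" for x
  proof -
    define m where "m = (1/2::real) *\<^sub>R x + (1 - 1/2) *\<^sub>R u 0"
    have sc: "f2 m \<le> 1/2 * f2 x + (1-1/2) * f2 (u 0) - \<mu>/2 * (1/2) * (1-1/2) * (norm (x - u 0))\<^sup>2"
      using strong_conv[OF nm ne xi2_closed xi2_convex xi2_strong mu0 x u0D, of "1/2"] unfolding f2_def m_def by simp
    have mD: "m \<in> edom \<xi>2" using conv2[OF nm xi2_convex x u0D, of "1/2"] unfolding m_def by simp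
    have mk: "b + (inner a x / 2 + inner a (u 0) / 2) \<le> f2 m" using ab[OF mD] unfolding m_def by (simp add: inner_simps)
    have g1: "\<xi>1 (u 0) + inner (G (u 0)) (x - u 0) \<le> \<xi>1 x" by (rule grad_ineq[OF xi1_convex xi1_grad])
    have "2*b + inner a x + inner a (u 0) - f2 (u 0) + \<mu>/4 * (norm (x - u 0))\<^sup>2 \<le> f2 x"
      using mk sc by (simp add: field_simps)
    thus ?thesis using g1 by (simp add: inner_simps algebra_simps)
  qed
  have "\<exists>z\<in>U. z \<in> edom \<xi>2 \<and> (\<forall>x\<in>U. x \<in> edom \<xi>2 \<longrightarrow> \<xi>1 z + real_of_ereal (\<xi>2 z) \<le> \<xi>1 x + real_of_ereal (\<xi>2 x))"
    by (rule coercive_min[OF nm xi2_closed U_closed cont1 u0U u0D, of "\<mu>/2" "u 0" "a + G (u 0)"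
          "2*b + inner a (u 0) - f2 (u 0) + \<xi>1 (u 0) - inner (G (u 0)) (u 0)"])
       (use gr mu_pos in \<open>auto simp: f2_def\<close>)
  then obtain us where usU: "us \<in> U" and usD: "us \<in> edom \<xi>2" and usmin: "\<And>x. x \<in> U \<Longrightarrow> x \<in> edom \<xi>2 \<Longrightarrow> F us \<le> F x"
    unfolding F_def f2_def by blast
  have scF: "t *\<^sub>R x + (1-t) *\<^sub>R y \<in> U \<inter> edom \<xi>2 \<and>
      F (t *\<^sub>R x + (1-t) *\<^sub>R y) \<le> t * F x + (1-t) * F y - \<mu>/2 * t * (1-t) * (norm (x-y))\<^sup>2"
    if xy: "x \<in> U \<inter> edom \<xi>2" "y \<in> U \<inter> edom \<xi>2" and t: "0 \<le> t" "t \<le> 1" for x y t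
  proof
    show "t *\<^sub>R x + (1-t) *\<^sub>R y \<in> U \<inter> edom \<xi>2"
      using xy conv2[OF nm xi2_convex _ _ t, of x y] convexD[OF U_convex, of x y t "1-t"] t by auto
    have f2c: "f2 (t *\<^sub>R x + (1-t) *\<^sub>R y) \<le> t * f2 x + (1-t) * f2 y - \<mu>/2 * t * (1-t) * (norm (x-y))\<^sup>2"
      using strong_conv[OF nm ne xi2_closed xi2_convex xi2_strong mu0 _ _ t, of x y] xy unfolding f2_def by auto
    have eqp: "(1-t) *\<^sub>R y + t *\<^sub>R x = t *\<^sub>R x + (1-t) *\<^sub>R y" by (simp add: add.commute)
    have "\<xi>1 ((1-t) *\<^sub>R y + t *\<^sub>R x) \<le> (1-t) * \<xi>1 y + t * \<xi>1 x"
      using convex_onD[OF xi1_convex, of t y x] t by simp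
    hence f1c: "\<xi>1 (t *\<^sub>R x + (1-t) *\<^sub>R y) \<le> t * \<xi>1 x + (1-t) * \<xi>1 y" unfolding eqp by (simp add: add.commute)
    show "F (t *\<^sub>R x + (1-t) *\<^sub>R y) \<le> t * F x + (1-t) * F y - \<mu>/2 * t * (1-t) * (norm (x-y))\<^sup>2"
      using f1c f2c unfolding F_def by (simp add: algebra_simps)
  qed
  have QG: "\<mu>/2 * (norm (x - us))\<^sup>2 \<le> F x - F us" if "x \<in> U" "x \<in> edom \<xi>2" for x
    by (rule sc_min[where S="U \<inter> edom \<xi>2"]) (use scF usU usD usmin that in auto)
  have Fe: "ereal (\<xi>1 w) + \<xi>2 w = ereal (F w)" if "w \<in> edom \<xi>2" for w
    using fe[OF that] unfolding F_def by simp
  have argm: "is_argmin_on U (\<lambda>x. ereal (\<xi>1 x) + \<xi>2 x) us"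
    unfolding is_argmin_on_def
  proof (intro conjI ballI usU)
    fix z assume z: "z \<in> U"
    show "ereal (\<xi>1 us) + \<xi>2 us \<le> ereal (\<xi>1 z) + \<xi>2 z"
    proof (cases "z \<in> edom \<xi>2")
      case True thus ?thesis using usmin[OF z True] Fe[OF True] Fe[OF usD] by simp
    next
      case False hence "\<xi>2 z = \<infinity>" unfolding edom_def by simp
      thus ?thesis by simp
    qed
  qed
  have uniq: "\<forall>z. is_argmin_on U (\<lambda>x. ereal (\<xi>1 x) + \<xi>2 x) z \<longrightarrow> z = us"
  proof (intro allI impI)
    fix z assume zm: "is_argmin_on U (\<lambda>x. ereal (\<xi>1 x) + \<xi>2 x) z"
    hence zU: "z \<in> U" and zle: "ereal (\<xi>1 z) + \<xi>2 z \<le> ereal (\<xi>1 us) + \<xi>2 us"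
      using usU unfolding is_argmin_on_def by auto
    have zD: "z \<in> edom \<xi>2"
    proof (rule ccontr)
      assume "z \<notin> edom \<xi>2" hence "\<xi>2 z = \<infinity>" unfolding edom_def by simp
      with zle Fe[OF usD] show False by simp
    qed
    have "F z \<le> F us" using zle Fe[OF zD] Fe[OF usD] by simp
    with QG[OF zU zD] have "\<mu>/2 * (norm (z - us))\<^sup>2 \<le> 0" by simp
    hence "(norm (z - us))\<^sup>2 \<le> 0" using mu_pos by (simp add: mult_le_0_iff)
    thus "z = us" by simp
  qed
  have step: "is_argmin_on U (prox_model \<xi>1 G \<xi>2 (L k) (uh k)) (u k) \<and>
      L k * (norm (uh k - u (k-1)))\<^sup>2 \<le> L (k-1) * (norm (u (k-1) - u (k-2)))\<^sup>2" if k: "k \<ge> 1" for k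
  proof (cases "ereal (\<xi>1 (v k)) + \<xi>2 (v k) \<le> ereal (\<xi>1 (u (k - 1))) + \<xi>2 (u (k - 1))")
    case True
    from accept[OF k True] have uk: "u k = v k" and uh: "uh k = u (k - 1) + \<omega> (k - 1) *\<^sub>R (u (k - 1) - u (k - 2))"
      by auto
    have om: "0 \<le> \<omega> (k-1)" "\<omega> (k-1) \<le> sqrt (L (k - 1) / L k)" using \<omega>_range[OF k] by auto
    have Lp: "L k > 0" "L (k-1) > 0" using L_range by auto
    have "(\<omega> (k-1))\<^sup>2 \<le> (sqrt (L (k - 1) / L k))\<^sup>2" using om by (intro power_mono) auto
    also have "\<dots> = L (k-1) / L k" using Lp by simp
    finally have "L k * (\<omega> (k-1))\<^sup>2 \<le> L (k-1)" using Lp by (simp add: field_simps)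
    hence "L k * (\<omega> (k-1))\<^sup>2 * (norm (u (k-1) - u (k-2)))\<^sup>2 \<le> L (k-1) * (norm (u (k-1) - u (k-2)))\<^sup>2"
      by (intro mult_right_mono) auto
    moreover have "(norm (uh k - u (k-1)))\<^sup>2 = (\<omega> (k-1))\<^sup>2 * (norm (u (k-1) - u (k-2)))\<^sup>2"
      unfolding uh by (simp add: power_mult_distrib)
    ultimately show ?thesis using first_try[OF k] uk uh by (simp add: mult.assoc)
  next
    case False
    hence "ereal (\<xi>1 (v k)) + \<xi>2 (v k) > ereal (\<xi>1 (u (k - 1))) + \<xi>2 (u (k - 1))" by simp
    from restart[OF k this] have uh: "uh k = u (k-1)" and am: "is_argmin_on U (prox_model \<xi>1 G \<xi>2 (L k) (u (k - 1))) (u k)"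
      by auto
    have "L (k-1) \<ge> 0" using L_range[of "k-1"] by simp
    thus ?thesis using am uh by simp
  qed
  have ki: "u k \<in> edom \<xi>2 \<and> F (u k) + (L k + \<mu>)/2 * (norm (x - u k))\<^sup>2 \<le> F x + L k / 2 * (norm (x - uh k))\<^sup>2"
    if k: "k \<ge> 1" and x: "x \<in> U" "x \<in> edom \<xi>2" for k x
    using key_ineq[OF nm ne xi2_closed xi2_convex xi2_strong mu0 xi1_convex xi1_grad U_convex _ _ descent[OF k] x]
      step[OF k] L_range[of k] unfolding F_def f2_def by auto
  have uU: "u k \<in> U" for k
    using step[of k] u0U unfolding is_argmin_on_def by (cases "k = 0") auto
  have uD: "u k \<in> edom \<xi>2" for k
    using ki[of k "u 0", OF _ u0U u0D] u0D by (cases "k = 0") auto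
  define d where "d = (\<lambda>k. u k - u (k-1))"
  define \<Psi> where "\<Psi> = (\<lambda>k. F (u k) - F us + L k / 2 * (norm (d k))\<^sup>2)"
  have Fge: "\<mu>/2 * (norm (u k - us))\<^sup>2 \<le> F (u k) - F us" for k using QG[OF uU uD] .
  have Psi0: "0 \<le> \<Psi> k" for k
  proof -
    have "0 \<le> \<mu>/2 * (norm (u k - us))\<^sup>2" using mu0 by simp
    moreover have "0 \<le> L k / 2 * (norm (d k))\<^sup>2" using L_range[of k] by simp
    ultimately show ?thesis using Fge[of k] unfolding \<Psi>_def by linarith
  qed
  have dk2: "d (k-1) = u (k-1) - u (k-2)" for k unfolding d_def by (simp add: diff_diff_left numeral_2_eq_2)
  have dec: "\<Psi> k + \<mu>/2 * (norm (d k))\<^sup>2 \<le> \<Psi> (k-1)" if k: "k \<ge> 1" for k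
  proof -
    have a: "F (u k) + (L k + \<mu>)/2 * (norm (d k))\<^sup>2 \<le> F (u (k-1)) + L k / 2 * (norm (uh k - u (k-1)))\<^sup>2"
      using ki[OF k uU uD, of "k-1"] unfolding d_def by (simp add: norm_minus_commute)
    have b: "L k * (norm (uh k - u (k-1)))\<^sup>2 \<le> L (k-1) * (norm (d (k-1)))\<^sup>2"
      using step[OF k] unfolding dk2 by simp
    show ?thesis using a b unfolding \<Psi>_def by (simp add: field_simps)
  qed
  define A where "A = Lip * (Lip/\<mu> + 1)"
  have bnd: "F (u k) - F us \<le> A * ((norm (d k))\<^sup>2 + (norm (d (k-1)))\<^sup>2)" if k: "k \<ge> 1" for k
  proof -
    define aa where "aa = us - u k"
    define w where "w = u k - uh k"
    define e where "e = uh k - u (k-1)"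
    have Lk: "0 < L k" "L k \<le> Lip" using L_range by auto
    have "F (u k) + (L k + \<mu>)/2 * (norm aa)\<^sup>2 \<le> F us + L k / 2 * (norm (aa + w))\<^sup>2"
      using ki[OF k usU usD] unfolding aa_def w_def by simp
    also have "(norm (aa + w))\<^sup>2 = (norm aa)\<^sup>2 + 2 * inner aa w + (norm w)\<^sup>2"
      using norm_add_scale_sq[of aa 1 w] by simp
    finally have "F (u k) - F us \<le> L k * inner aa w + L k / 2 * (norm w)\<^sup>2 - \<mu>/2 * (norm aa)\<^sup>2"
      by (simp add: field_simps)
    also have "L k * inner aa w \<le> \<mu>/2 * (norm aa)\<^sup>2 + (L k)\<^sup>2/(2*\<mu>) * (norm w)\<^sup>2"
      using young_ineq[OF mu_pos, of "L k" aa w] Lk by simp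
    finally have f1: "F (u k) - F us \<le> ((L k)\<^sup>2/(2*\<mu>) + L k / 2) * (norm w)\<^sup>2" by (simp add: algebra_simps)
    have "w = d k - e" unfolding w_def d_def e_def by simp
    hence "(norm w)\<^sup>2 \<le> 2 * (norm (d k))\<^sup>2 + 2 * (norm e)\<^sup>2" using norm_diff_sq_le by simp
    hence "F (u k) - F us \<le> ((L k)\<^sup>2/(2*\<mu>) + L k / 2) * (2 * (norm (d k))\<^sup>2 + 2 * (norm e)\<^sup>2)"
      using f1 Lk mu_pos by (smt (verit) mult_left_mono zero_le_divide_iff zero_le_power2)
    also have "\<dots> = (L k/\<mu> + 1) * (L k * (norm (d k))\<^sup>2 + L k * (norm e)\<^sup>2)"
      using mu_pos by (simp add: field_simps power2_eq_square)
    also have "\<dots> \<le> (Lip/\<mu> + 1) * (Lip * (norm (d k))\<^sup>2 + Lip * (norm (d (k-1)))\<^sup>2)"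
    proof (rule mult_mono)
      show "L k/\<mu> + 1 \<le> Lip/\<mu> + 1" using Lk mu_pos by (simp add: divide_right_mono)
      have "L k * (norm e)\<^sup>2 \<le> L (k-1) * (norm (d (k-1)))\<^sup>2" using step[OF k] unfolding e_def dk2 by simp
      also have "\<dots> \<le> Lip * (norm (d (k-1)))\<^sup>2" using L_range[of "k-1"] by (simp add: mult_right_mono)
      finally have "L k * (norm e)\<^sup>2 \<le> Lip * (norm (d (k-1)))\<^sup>2" .
      moreover have "L k * (norm (d k))\<^sup>2 \<le> Lip * (norm (d k))\<^sup>2" using Lk by (simp add: mult_right_mono)
      ultimately show "L k * (norm (d k))\<^sup>2 + L k * (norm e)\<^sup>2 \<le> Lip * (norm (d k))\<^sup>2 + Lip * (norm (d (k-1)))\<^sup>2"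
        by simp
      show "0 \<le> Lip/\<mu> + 1" using Lip_pos mu_pos by simp
      show "0 \<le> L k * (norm (d k))\<^sup>2 + L k * (norm e)\<^sup>2" using Lk by simp
    qed
    finally show ?thesis unfolding A_def by (simp add: algebra_simps)
  qed
  define A' where "A' = A + Lip/2"
  have Ap: "A > 0" unfolding A_def using Lip_pos mu_pos by (simp add: add_pos_nonneg)
  have A'p: "A' > 0" unfolding A'_def using Ap Lip_pos by simp
  have Pb: "\<Psi> k \<le> A' * ((norm (d k))\<^sup>2 + (norm (d (k-1)))\<^sup>2)" if k: "k \<ge> 1" for k
  proof -
    have "L k / 2 * (norm (d k))\<^sup>2 \<le> Lip / 2 * (norm (d k))\<^sup>2" using L_range[of k] by (simp add: mult_right_mono)
    moreover have "0 \<le> Lip / 2 * (norm (d (k-1)))\<^sup>2" using Lip_pos by simp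
    ultimately show ?thesis using bnd[OF k] unfolding \<Psi>_def A'_def by (simp add: algebra_simps)
  qed
  have dk: "(norm (d k))\<^sup>2 \<le> 2/\<mu> * (\<Psi> (k-1) - \<Psi> k)" if k: "k \<ge> 1" for k
    using dec[OF k] mu_pos by (simp add: field_simps)
  have dk1: "(norm (d (k-1)))\<^sup>2 \<le> 2/\<mu> * (\<Psi> (k-2) - \<Psi> (k-1))" if k: "k \<ge> 1" for k
  proof (cases "k = 1")
    case True thus ?thesis unfolding d_def by simp
  next
    case False
    hence "k - 1 \<ge> 1" "k - 1 - 1 = k - 2" using k by auto
    with dk[of "k-1"] show ?thesis by simp
  qed
  define B where "B = 2*A'/\<mu>"
  define \<rho> where "\<rho> = B / (1 + B)"
  have Bp: "B > 0" unfolding B_def using A'p mu_pos by simp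
  have rho: "0 < \<rho>" "\<rho> < 1" unfolding \<rho>_def using Bp by auto
  have contr: "\<Psi> k \<le> \<rho> * \<Psi> (k-2)" if k: "k \<ge> 1" for k
  proof -
    have "\<Psi> k \<le> A' * (2/\<mu> * (\<Psi> (k-1) - \<Psi> k) + 2/\<mu> * (\<Psi> (k-2) - \<Psi> (k-1)))"
      using Pb[OF k] dk[OF k] dk1[OF k] A'p by (smt (verit) mult_left_mono)
    also have "\<dots> = B * (\<Psi> (k-2) - \<Psi> k)" unfolding B_def using mu_pos by (simp add: field_simps)
    finally have "(1 + B) * \<Psi> k \<le> B * \<Psi> (k-2)" by (simp add: algebra_simps)
    thus ?thesis unfolding \<rho>_def using Bp by (simp add: field_simps)
  qed
  define \<tau> where "\<tau> = sqrt \<rho>"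
  have tau: "0 < \<tau>" "\<tau> < 1" "\<tau>\<^sup>2 = \<rho>" unfolding \<tau>_def using rho by auto
  define C0 where "C0 = \<Psi> 0 / \<rho>"
  have geo: "\<Psi> k \<le> C0 * \<tau> ^ k" for k
  proof (induction k rule: less_induct)
    case (less k)
    show ?case
    proof (cases "k \<le> 1")
      case True
      have P0: "0 \<le> \<Psi> 0" by (rule Psi0)
      show ?thesis
      proof (cases "k = 0")
        case True
        have "\<rho> * \<Psi> 0 \<le> \<Psi> 0" using rho P0 by (simp add: mult_left_le_one_le)
        thus ?thesis using True rho unfolding C0_def by (simp add: field_simps)
      next
        case False
        hence k1: "k = 1" using \<open>k \<le> 1\<close> by simp
        have "\<Psi> 1 \<le> \<rho> * \<Psi> 0" using contr[of 1] by simp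
        also have "\<rho> * \<rho> \<le> \<tau>"
        proof -
          have "\<rho> * \<rho> \<le> \<rho>" using rho by (simp add: mult_left_le_one_le)
          also have "\<rho> = \<tau> * \<tau>" using tau by (simp add: power2_eq_square)
          also have "\<dots> \<le> \<tau>" using tau by (simp add: mult_left_le_one_le)
          finally show ?thesis .
        qed
        hence "(\<rho> * \<rho>) * \<Psi> 0 \<le> \<tau> * \<Psi> 0" using P0 by (rule mult_right_mono)
        hence "\<rho> * \<Psi> 0 \<le> C0 * \<tau>" unfolding C0_def using rho
          by (simp add: field_simps)
        finally show ?thesis using k1 by simp
      qed
    next
      case False
      hence k2: "k \<ge> 2" by simp
      have "\<Psi> k \<le> \<rho> * \<Psi> (k-2)" using contr[of k] k2 by simp
      also have "\<dots> \<le> \<rho> * (C0 * \<tau> ^ (k-2))" using less[of "k-2"] k2 rho by (simp add: mult_left_mono)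
      also have "\<dots> = C0 * (\<tau>\<^sup>2 * \<tau> ^ (k-2))" using tau by simp
      also have "\<tau>\<^sup>2 * \<tau> ^ (k-2) = \<tau> ^ k"
      proof -
        obtain j where "k = j + 2" using k2 by (metis add.commute le_add_diff_inverse)
        thus ?thesis by (simp add: power_add power2_eq_square)
      qed
      finally show ?thesis .
    qed
  qed
  define \<sigma> where "\<sigma> = sqrt \<tau>"
  have sig: "0 < \<sigma>" "\<sigma> < 1" "\<sigma>\<^sup>2 = \<tau>" unfolding \<sigma>_def using tau by auto
  define C where "C = sqrt (2 * C0 / \<mu>) + 1"
  have C0p: "C0 \<ge> 0" unfolding C0_def using Psi0[of 0] rho by simp
  have fin: "norm (u k - us) \<le> C * \<sigma> ^ k" for k
  proof -
    have "(norm (u k - us))\<^sup>2 \<le> 2/\<mu> * \<Psi> k"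
    proof -
      have "\<mu>/2 * (norm (u k - us))\<^sup>2 \<le> \<Psi> k"
      proof -
        have "0 \<le> L k / 2 * (norm (d k))\<^sup>2" using L_range[of k] by simp
        thus ?thesis using Fge[of k] unfolding \<Psi>_def by linarith
      qed
      thus ?thesis using mu_pos by (simp add: field_simps)
    qed
    also have "\<dots> \<le> 2/\<mu> * (C0 * \<tau> ^ k)" using geo[of k] mu_pos by (simp add: divide_right_mono)
    also have "\<dots> = (sqrt (2 * C0 / \<mu>) * \<sigma> ^ k)\<^sup>2"
    proof -
      have e1: "(\<sigma> ^ k)\<^sup>2 = (\<sigma>\<^sup>2) ^ k" unfolding power_mult[symmetric] by (simp add: mult.commute)
      have e2: "(\<sigma> ^ k)\<^sup>2 = \<tau> ^ k" unfolding e1 sig(3) ..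
      have e3: "(sqrt (2 * C0 / \<mu>))\<^sup>2 = 2 * C0 / \<mu>" using C0p mu_pos by simp
      show ?thesis unfolding power_mult_distrib e2 e3 by simp
    qed
    finally have sq: "(norm (u k - us))\<^sup>2 \<le> (sqrt (2 * C0 / \<mu>) * \<sigma> ^ k)\<^sup>2" .
    have sp: "0 \<le> sqrt (2 * C0 / \<mu>)" using C0p mu_pos by simp
    have skp: "0 \<le> \<sigma> ^ k" using sig(1) by simp
    have "norm (u k - us) \<le> sqrt (2 * C0 / \<mu>) * \<sigma> ^ k"
      by (rule power2_le_imp_le[OF sq mult_nonneg_nonneg[OF sp skp]])
    also have "\<dots> \<le> C * \<sigma> ^ k" unfolding C_def by (rule mult_right_mono[OF _ skp]) simp
    finally show ?thesis .
  qed
  show ?thesis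
  proof (intro exI conjI)
    show "is_argmin_on U (\<lambda>x. ereal (\<xi>1 x) + \<xi>2 x) us" by (rule argm)
    show "\<forall>z. is_argmin_on U (\<lambda>x. ereal (\<xi>1 x) + \<xi>2 x) z \<longrightarrow> z = us" by (rule uniq)
    show "C > 0" unfolding C_def using C0p mu_pos by (simp add: add_nonneg_pos)
    show "0 < \<sigma>" "\<sigma> < 1" using sig by auto
    show "\<forall>k. norm (u k - us) \<le> C * \<sigma> ^ k" using fin by blast
  qed
qed

end
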